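(* For every $\varepsilon>0$ there exists a setting with two items and two unit-demand agents whose valuations satisfy single-crossing, such that every deterministic ex-post IC mechanism has, at some signal profile, welfare at most $(\tfrac12+\varepsilon)$ times the optimal welfare.
   Context: Two agents, items $a,b$; each agent has a scalar signal (possibly trivial); values $v_{ij}(\mathbf{s})\ge0$ for item $j$ are public functions of the profile; unit demand means the value for a bundle $T$ is $\max_{j\in T}v_{ij}(\mathbf{s})$ (and $0$ for $\emptyset$). Single-crossing: for every agent $i$, every $\mathbf{s}_{-i}$, item $j$, agent $\ell$, and $s_i<s_i'$, $v_{ij}(s_i',\mathbf{s}_{-i})-v_{ij}(s_i,\mathbf{s}_{-i})\ge v_{\ell j}(s_i',\mathbf{s}_{-i})-v_{\ell j}(s_i,\mathbf{s}_{-i})$. A deterministic mechanism maps reports to an allocation of disjoint bundles and payments; ex-post IC means truthful reporting maximizes (true value of received bundle minus payment) for every true profile when others report truthfully. *)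

theory Defs
  imports Main "HOL-Library.Extended_Real" Complex_Main
begin

datatype agent = Ag1 | Ag2
datatype item = ItA | ItB

lemma UNIV_agent: "(UNIV :: agent set) = {Ag1, Ag2}"
  using agent.exhaust by auto
lemma UNIV_item: "(UNIV :: item set) = {ItA, ItB}"
  using item.exhaust by auto

instance agent :: finite
  by standard (simp add: UNIV_agent)
instance item :: finite
  by standard (simp add: UNIV_item)

type_synonym profile = "agent \<Rightarrow> real"
type_synonym valuation = "agent \<Rightarrow> item \<Rightarrow> profile \<Rightarrow> real"
type_synonym allocation = "agent \<Rightarrow> item set"
type_synonym mechanism = "profile \<Rightarrow> allocation \<times> (agent \<Rightarrow> real)"

definition profiles :: "(agent \<Rightarrow> real set) \<Rightarrow> profile set" where
  "profiles S = {s. \<forall>i. s i \<in> S i}"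

definition bundle_value :: "valuation \<Rightarrow> agent \<Rightarrow> profile \<Rightarrow> item set \<Rightarrow> real" where
  "bundle_value v i s T = (if T = {} then 0 else Max ((\<lambda>j. v i j s) ` T))"

definition feasible :: "allocation \<Rightarrow> bool" where
  "feasible X \<longleftrightarrow> X Ag1 \<inter> X Ag2 = {}"

definition welfare :: "valuation \<Rightarrow> profile \<Rightarrow> allocation \<Rightarrow> real" where
  "welfare v s X = (\<Sum>i\<in>UNIV. bundle_value v i s (X i))"

definition opt_welfare :: "valuation \<Rightarrow> profile \<Rightarrow> real" where
  "opt_welfare v s = Max (welfare v s ` {X. feasible X})"

definition nonneg_vals :: "(agent \<Rightarrow> real set) \<Rightarrow> valuation \<Rightarrow> bool" where
  "nonneg_vals S v \<longleftrightarrow> (\<forall>s\<in>profiles S. \<forall>i j. v i j s \<ge> 0)"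

definition single_crossing :: "(agent \<Rightarrow> real set) \<Rightarrow> valuation \<Rightarrow> bool" where
  "single_crossing S v \<longleftrightarrow>
     (\<forall>i. \<forall>s\<in>profiles S. \<forall>j l. \<forall>x\<in>S i. \<forall>x'\<in>S i. x < x' \<longrightarrow>
        v i j (s(i := x')) - v i j (s(i := x)) \<ge> v l j (s(i := x')) - v l j (s(i := x)))"

definition valid_mechanism :: "(agent \<Rightarrow> real set) \<Rightarrow> mechanism \<Rightarrow> bool" where
  "valid_mechanism S M \<longleftrightarrow> (\<forall>s\<in>profiles S. feasible (fst (M s)))"

definition expost_IC :: "(agent \<Rightarrow> real set) \<Rightarrow> valuation \<Rightarrow> mechanism \<Rightarrow> bool" where
  "expost_IC S v M \<longleftrightarrow>
     (\<forall>s\<in>profiles S. \<forall>i. \<forall>r\<in>S i.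
        bundle_value v i s (fst (M s) i) - snd (M s) i
          \<ge> bundle_value v i s (fst (M (s(i := r))) i) - snd (M (s(i := r))) i)"

end

theory Submission
  imports Defs
begin

definition vv :: "real \<Rightarrow> valuation" where
  "vv L i j s = (case (i,j) of (Ag1,ItA) \<Rightarrow> 1 + (L+1) * s Ag1 | (Ag1,ItB) \<Rightarrow> L * s Ag1
     | (Ag2,ItA) \<Rightarrow> 1 + (L-1) * s Ag1 | (Ag2,ItB) \<Rightarrow> 1 - s Ag1)"

definition SS :: "agent \<Rightarrow> real set" where
  "SS i = (if i = Ag1 then {0,1} else {0})"

lemma item_sets: "(T::item set) = {} \<or> T = {ItA} \<or> T = {ItB} \<or> T = {ItA,ItB}"
proof -
  have "T \<subseteq> {ItA, ItB}" using UNIV_item by auto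
  thus ?thesis by (cases "ItA \<in> T"; cases "ItB \<in> T") auto
qed

lemma bv: "bundle_value v i s {} = 0" "bundle_value v i s {j} = v i j s"
  "bundle_value v i s {ItA,ItB} = max (v i ItA s) (v i ItB s)"
  by (auto simp: bundle_value_def)

lemma welf: "welfare v s X = bundle_value v Ag1 s (X Ag1) + bundle_value v Ag2 s (X Ag2)"
  by (simp add: welfare_def UNIV_agent)

lemma opt_ge: "feasible X \<Longrightarrow> welfare v s X \<le> opt_welfare v s"
  unfolding opt_welfare_def by (rule Max_ge) auto

definition XA :: allocation where "XA = (\<lambda>i. if i = Ag1 then {ItA} else {ItB})"
definition XB :: allocation where "XB = (\<lambda>i. if i = Ag1 then {ItB} else {ItA})"

lemma alloc_eq: "X Ag1 = P \<Longrightarrow> X Ag2 = Q \<Longrightarrow> X = (\<lambda>i. if i = Ag1 then P else Q)"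
  by (rule ext, case_tac i) auto

theorem mainTheorem12:
  fixes \<epsilon> :: real
  assumes "\<epsilon> > 0"
  shows "\<exists>(S :: agent \<Rightarrow> real set) (v :: valuation).
           (\<forall>i. S i \<noteq> {}) \<and> nonneg_vals S v \<and> single_crossing S v \<and>
           (\<forall>M. valid_mechanism S M \<and> expost_IC S v M \<longrightarrow>
              (\<exists>s\<in>profiles S. opt_welfare v s > 0 \<and>
                 welfare v s (fst (M s)) \<le> (1/2 + \<epsilon>) * opt_welfare v s))"
proof -
  define L where "L = 1 + 1/\<epsilon>"
  have L1: "L \<ge> 1" using assms by (simp add: L_def)
  have L2: "2*\<epsilon>*L = 2*\<epsilon> + 2" using assms by (simp add: L_def field_simps)
  let ?v = "vv L"
  have ne: "\<forall>i. SS i \<noteq> {}" by (simp add: SS_def)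
  have nn: "nonneg_vals SS ?v"
    unfolding nonneg_vals_def profiles_def
  proof (intro ballI allI)
    fix s :: profile and i j assume "s \<in> {s. \<forall>i. s i \<in> SS i}"
    hence "s Ag1 \<in> SS Ag1" by auto
    hence "s Ag1 = 0 \<or> s Ag1 = 1" by (auto simp: SS_def)
    thus "0 \<le> vv L i j s" using L1 by (cases i; cases j) (auto simp: vv_def)
  qed
  have sc: "single_crossing SS ?v"
    unfolding single_crossing_def
  proof (intro allI ballI impI)
    fix i s j l x x' assume x: "x \<in> SS i" "x' \<in> SS i" "x < x'"
    show "vv L l j (s(i := x')) - vv L l j (s(i := x)) \<le> vv L i j (s(i := x')) - vv L i j (s(i := x))"
    proof (cases i)
      case Ag1
      with x have "x = 0" "x' = 1" by (auto simp: SS_def)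
      thus ?thesis using Ag1 L1 by (cases j; cases l) (auto simp: vv_def)
    next
      case Ag2 with x show ?thesis by (auto simp: SS_def)
    qed
  qed
  have main: "\<exists>s\<in>profiles SS. opt_welfare ?v s > 0 \<and>
                 welfare ?v s (fst (M s)) \<le> (1/2 + \<epsilon>) * opt_welfare ?v s"
    if M: "valid_mechanism SS M" "expost_IC SS ?v M" for M
  proof (rule ccontr)
    assume H: "\<not> ?thesis"
    define s0 :: profile where "s0 = (\<lambda>_. 0)"
    define s1 :: profile where "s1 = s0(Ag1 := 1)"
    have p0: "s0 \<in> profiles SS" by (auto simp: s0_def profiles_def SS_def)
    have p1: "s1 \<in> profiles SS" by (auto simp: s1_def s0_def profiles_def SS_def)
    have s10: "s1(Ag1 := 0) = s0" by (auto simp: s1_def s0_def)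
    have fA: "feasible XA" and fB: "feasible XB" by (auto simp: feasible_def XA_def XB_def)
    have o0: "opt_welfare ?v s0 \<ge> 2"
      using opt_ge[OF fA, of ?v s0] by (simp add: welf XA_def bv vv_def s0_def)
    have o1: "opt_welfare ?v s1 \<ge> 2*L"
      using opt_ge[OF fB, of ?v s1] by (simp add: welf XB_def bv vv_def s1_def s0_def)
    have w0: "welfare ?v s0 (fst (M s0)) > (1/2+\<epsilon>) * opt_welfare ?v s0"
      using H p0 o0 by force
    have w1: "welfare ?v s1 (fst (M s1)) > (1/2+\<epsilon>) * opt_welfare ?v s1"
      using H p1 o1 L1 by force
    have "(1/2+\<epsilon>) * opt_welfare ?v s0 \<ge> (1/2+\<epsilon>) * 2"
      using o0 assms by (intro mult_left_mono) auto
    with w0 assms have w0': "welfare ?v s0 (fst (M s0)) > 1" by (simp add: algebra_simps)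
    have "(1/2+\<epsilon>) * opt_welfare ?v s1 \<ge> (1/2+\<epsilon>) * (2*L)"
      using o1 assms by (intro mult_left_mono) auto
    with w1 L2 assms have w1': "welfare ?v s1 (fst (M s1)) > L + 2" by (simp add: algebra_simps)
    have f0: "feasible (fst (M s0))" using M p0 by (auto simp: valid_mechanism_def)
    have f1: "feasible (fst (M s1))" using M p1 by (auto simp: valid_mechanism_def)
    have X0: "fst (M s0) = XA"
    proof -
      have "fst (M s0) Ag1 = {ItA} \<and> fst (M s0) Ag2 = {ItB}"
        using item_sets[of "fst (M s0) Ag1"] item_sets[of "fst (M s0) Ag2"] w0' f0
        by (auto simp: welf bv vv_def s0_def feasible_def)
      thus ?thesis unfolding XA_def by (intro alloc_eq) auto
    qed
    have X1: "fst (M s1) = XB"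
    proof -
      have "fst (M s1) Ag1 = {ItB} \<and> fst (M s1) Ag2 = {ItA}"
        using item_sets[of "fst (M s1) Ag1"] item_sets[of "fst (M s1) Ag2"] w1' f1 L1
        by (auto simp: welf bv vv_def s1_def s0_def feasible_def)
      thus ?thesis unfolding XB_def by (intro alloc_eq) auto
    qed
    have i0: "bundle_value ?v Ag1 s0 (fst (M s0) Ag1) - snd (M s0) Ag1
          \<ge> bundle_value ?v Ag1 s0 (fst (M (s0(Ag1 := 1))) Ag1) - snd (M (s0(Ag1 := 1))) Ag1"
      using M(2) p0 unfolding expost_IC_def by (auto simp: SS_def)
    have i1: "bundle_value ?v Ag1 s1 (fst (M s1) Ag1) - snd (M s1) Ag1
          \<ge> bundle_value ?v Ag1 s1 (fst (M (s1(Ag1 := 0))) Ag1) - snd (M (s1(Ag1 := 0))) Ag1"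
      using M(2) p1 unfolding expost_IC_def by (auto simp: SS_def)
    from i0 i1 X0 X1 show False
      unfolding s10 s1_def[symmetric]
      by (simp add: XA_def XB_def bv vv_def s1_def s0_def)
  qed
  show ?thesis using ne nn sc main by blast
qed

end
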